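(* Let $(X,d)$ be a complete metric space and let $G:X\times X\to X$ be a mapping such that (i) $G(x,x)=x$ for all $x\in X$, and (ii) for $x,y\in X$, $G(x,y)=x$ implies $y=x$. Let $T:X\to P_{cl}(X)$ be a multivalued operator with $SFix(T)\neq\emptyset$ and let $T_G(x)=\{G(x,u):u\in T(x)\}$ be the admissible perturbation of $T$ corresponding to $G$. Suppose there exist $\alpha,\beta,\gamma\ge0$ with $\alpha+\beta+\gamma<1$ such that $$H(T_G(x),T_G(y))\le\alpha d(x,y)+\beta D(x,T_G(y))+\gamma D(y,T_G(x))\quad\text{for all }x,y\in X,$$ and that (iii) there exists $L>0$ with $D(x,T_G(x))\le L\,D(x,T(x))$ for every $x\in X$. Then the strict fixed point problem $T(x)=\{x\}$ is Ulam–Hyers stable: there exists $c>0$ such that for every $\varepsilon>0$ and every $y^*\in X$ with $D(y^*,T(y^* ))\le\varepsilon$ there exists $x^*\in SFix(T)$ with $d(y^*,x^* )\le c\varepsilon$.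
   Context: $P_{cl}(X)$ is the family of nonempty closed subsets of $X$; $SFix(T)=\{x:T(x)=\{x\}\}$. For nonempty $A,B\subseteq X$: $D(a,B)=\inf_{b\in B}d(a,b)$, $e(A,B)=\sup_{a\in A}D(a,B)$, $H(A,B)=\max\{e(A,B),e(B,A)\}$. *)

theory Defs
  imports "HOL-Analysis.Analysis"
begin

text \<open>D(a,B) = inf of distances; for nonempty B this is the library's infdist.\<close>
definition Dpt :: "'a::metric_space \<Rightarrow> 'a set \<Rightarrow> real" where
  "Dpt a B = infdist a B"

text \<open>Excess and Pompeiu-Hausdorff functional, valued in the extended reals
  (they may be infinite for unbounded sets).\<close>
definition excess :: "'a::metric_space set \<Rightarrow> 'a set \<Rightarrow> ereal" where
  "excess A B = (SUP a\<in>A. ereal (Dpt a B))"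

definition Hpom :: "'a::metric_space set \<Rightarrow> 'a set \<Rightarrow> ereal" where
  "Hpom A B = max (excess A B) (excess B A)"

definition SFix :: "('a \<Rightarrow> 'a set) \<Rightarrow> 'a set" where
  "SFix T = {x. T x = {x}}"

definition admissible_perturbation :: "('a \<Rightarrow> 'a \<Rightarrow> 'a) \<Rightarrow> ('a \<Rightarrow> 'a set) \<Rightarrow> 'a \<Rightarrow> 'a set" where
  "admissible_perturbation G T x = {G x u | u. u \<in> T x}"

end

theory Submission
  imports Defs
begin

theorem mainTheorem5:
  fixes G :: "'a::complete_space \<Rightarrow> 'a \<Rightarrow> 'a"
    and T :: "'a \<Rightarrow> 'a set"
    and \<alpha> \<beta> \<gamma> L :: real
  assumes G_diag: "\<And>x. G x x = x"
    and G_inj: "\<And>x y. G x y = x \<Longrightarrow> y = x"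
    and T_ne: "\<And>x. T x \<noteq> {}"
    and T_closed: "\<And>x. closed (T x)"
    and SFix_ne: "SFix T \<noteq> {}"
    and coef: "\<alpha> \<ge> 0" "\<beta> \<ge> 0" "\<gamma> \<ge> 0" "\<alpha> + \<beta> + \<gamma> < 1"
    and contr: "\<And>x y. Hpom (admissible_perturbation G T x) (admissible_perturbation G T y)
        \<le> ereal (\<alpha> * dist x y + \<beta> * Dpt x (admissible_perturbation G T y)
                  + \<gamma> * Dpt y (admissible_perturbation G T x))"
    and L_pos: "L > 0"
    and L_bound: "\<And>x. Dpt x (admissible_perturbation G T x) \<le> L * Dpt x (T x)"
  shows "\<exists>c>0. \<forall>\<epsilon>>0. \<forall>y. Dpt y (T y) \<le> \<epsilon> \<longrightarrow>
           (\<exists>x\<in>SFix T. dist y x \<le> c * \<epsilon>)"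
proof -
  let ?TG = "admissible_perturbation G T"
  obtain z where z: "z \<in> SFix T" using SFix_ne by blast
  have Tz: "T z = {z}" using z by (simp add: SFix_def)
  have TGz: "?TG z = {z}" using Tz G_diag by (auto simp: admissible_perturbation_def)
  define k where "k = (\<alpha> + \<beta>) / (1 - \<gamma>)"
  have g1: "1 - \<gamma> > 0" using coef by linarith
  have k0: "k \<ge> 0" using coef g1 unfolding k_def by simp
  have k1: "1 - k > 0" using coef g1 unfolding k_def by (simp add: field_simps)
  define c where "c = L / (1 - k)"
  have c0: "c > 0" using L_pos k1 unfolding c_def by simp
  have key: "(1 - k) * dist y z \<le> Dpt y (?TG y)" for y
  proof -
    define d where "d = dist y z"
    define R where "R = \<alpha> * d + \<beta> * d + \<gamma> * Dpt z (?TG y)"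
    have ne: "?TG y \<noteq> {}" using T_ne[of y] by (auto simp: admissible_perturbation_def)
    have HR: "Hpom (?TG y) {z} \<le> ereal R"
      using contr[of y z] unfolding TGz R_def d_def by (simp add: Dpt_def)
    have e1: "ereal (dist u z) \<le> ereal R" if "u \<in> ?TG y" for u
    proof -
      have "ereal (Dpt u {z}) \<le> excess (?TG y) {z}"
        unfolding excess_def using that by (rule SUP_upper)
      also have "\<dots> \<le> Hpom (?TG y) {z}" unfolding Hpom_def by simp
      finally have "ereal (dist u z) \<le> Hpom (?TG y) {z}" by (simp add: Dpt_def)
      from order_trans[OF this HR] show ?thesis .
    qed
    have e2: "ereal (Dpt z (?TG y)) \<le> ereal R"
    proof -
      have "ereal (Dpt z (?TG y)) \<le> excess {z} (?TG y)"
        unfolding excess_def by simp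
      also have "\<dots> \<le> Hpom (?TG y) {z}" unfolding Hpom_def by simp
      finally show ?thesis using HR by (rule order_trans)
    qed
    have D1: "Dpt z (?TG y) \<le> k * d"
    proof -
      have "Dpt z (?TG y) \<le> (\<alpha> + \<beta>) * d + \<gamma> * Dpt z (?TG y)" using e2 R_def
        by (simp add: algebra_simps)
      hence "(1 - \<gamma>) * Dpt z (?TG y) \<le> (\<alpha> + \<beta>) * d" by (simp add: algebra_simps)
      thus ?thesis unfolding k_def using g1 by (simp add: field_simps)
    qed
    have Rk: "R \<le> k * d"
    proof -
      have "R \<le> (\<alpha> + \<beta>) * d + \<gamma> * (k * d)" unfolding R_def
        using D1 coef by (simp add: algebra_simps mult_left_mono)
      also have "\<dots> = k * d" unfolding k_def using g1 by (simp add: field_simps)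
      finally show ?thesis .
    qed
    have "(1 - k) * d \<le> dist y u" if "u \<in> ?TG y" for u
    proof -
      have "dist u z \<le> k * d" using e1[OF that] Rk by simp
      moreover have "d \<le> dist y u + dist u z" unfolding d_def by (rule dist_triangle)
      ultimately show ?thesis by (simp add: algebra_simps)
    qed
    hence "(1 - k) * d \<le> infdist y (?TG y)" using ne by (simp add: infdist_def le_cINF_iff)
    thus ?thesis unfolding d_def Dpt_def .
  qed
  show ?thesis
  proof (intro exI[of _ c] conjI c0 allI impI)
    fix \<epsilon> :: real and y assume "\<epsilon> > 0" "Dpt y (T y) \<le> \<epsilon>"
    have "(1 - k) * dist y z \<le> L * \<epsilon>"
      using key[of y] L_bound[of y] \<open>Dpt y (T y) \<le> \<epsilon>\<close> L_pos
      by (smt (verit) mult_left_mono)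
    hence "dist y z \<le> c * \<epsilon>" unfolding c_def using k1 by (simp add: field_simps)
    thus "\<exists>x\<in>SFix T. dist y x \<le> c * \<epsilon>" using z by blast
  qed
qed

end
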